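(* Let $\{z_n\}$ be a sequence of non-zero complex numbers with $|z_n|\to\infty$ whose classical exponent of convergence is less than $1$, and let $P(z)=\prod_n(1-z/z_n)$ be its canonical product. Suppose $\{z_n\}$ has finite $\varphi$-exponent of convergence $\lambda\ge0$. Let $\varphi$ and $s$ be differentiable with $\limsup_{r\to\infty}\frac{r^2s'(r)}{s(r)^2}<\infty$, and suppose $$\limsup_{r\to\infty}\frac{\varphi'(s(r))s'(r)r}{\varphi(s(r))}<\frac1\lambda\quad\text{or}\quad\liminf_{r\to\infty}\frac{\varphi'(s(r))s'(r)r}{\varphi(s(r))}\ge\frac1\lambda$$ (with $1/0=\infty$). Let $\varepsilon>0$ and $r_n=|z_n|$. If $z$ lies outside the discs $D_n=\{z:|z-z_n|\le r_n^{-(\lambda+\varepsilon)}\}$, then $$\log\frac{1}{|P(z)|}=O\left(\varphi(s(r))^{\lambda+\varepsilon}\log r\right),\quad |z|=r\to\infty.$$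
   Context: Let $R_0>0$. $\varphi:(R_0,\infty)\to(0,\infty)$ is a non-decreasing unbounded function with $\log r\le\varphi(r)\le r$ for $r\ge R_0$; $s:(R_0,\infty)\to(0,\infty)$ is non-decreasing with $r<s(r)\le r^2$ for $r\ge R_0$ and $\liminf_{r\to\infty}s(r)/r>1$. The $\varphi$-exponent of convergence of $\{z_n\}$ is $\inf\{\mu>0:\sum_n\varphi(|z_n|)^{-\mu}<\infty\}$ ($=\infty$ if the sum diverges for all $\mu>0$). *)

theory Defs
  imports "HOL-Analysis.Analysis"
begin

definition phi_exponent :: "(real \<Rightarrow> real) \<Rightarrow> (nat \<Rightarrow> complex) \<Rightarrow> ereal" where
  "phi_exponent \<phi> z =
     Inf {ereal \<mu> | \<mu>. \<mu> > 0 \<and> summable (\<lambda>n. \<phi> (norm (z n)) powr (- \<mu>))}"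

definition conv_exponent :: "(nat \<Rightarrow> complex) \<Rightarrow> ereal" where
  "conv_exponent z = phi_exponent (\<lambda>r. r) z"

definition canonical_product :: "(nat \<Rightarrow> complex) \<Rightarrow> complex \<Rightarrow> complex" where
  "canonical_product z w = (\<Prod>n. 1 - w / z n)"

end

theory Submission imports Defs begin

lemma growth_upper:
  fixes g g' :: "real \<Rightarrow> real"
  assumes D: "\<And>u. u \<ge> U \<Longrightarrow> (g has_real_derivative g' u) (at u)"
    and P: "\<And>u. u \<ge> U \<Longrightarrow> g u > 0" and U: "U > 0"
    and Q: "\<And>u. u \<ge> U \<Longrightarrow> g' u * u / g u \<le> a"
    and xy: "U \<le> x" "x \<le> y"
  shows "g y \<le> g x * (y / x) powr a"
proof -
  let ?h = "\<lambda>u. ln (g u) - a * ln u"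
  have "?h y \<le> ?h x"
  proof (rule deriv_nonpos_imp_antimono[where g = ?h and a = x and b = y and g' = "\<lambda>u. g' u / g u - a * (1/u)"])
    fix u assume u: "u \<in> {x..y}"
    hence uU: "u \<ge> U" using xy by auto
    show "(?h has_real_derivative g' u / g u - a * (1/u)) (at u)"
      using uU U P[OF uU]
      by (auto intro!: derivative_eq_intros D)
    have "g' u * u / g u \<le> a" using Q[OF uU] .
    hence "g' u / g u \<le> a / u" using uU U P[OF uU]
      by (simp add: field_simps)
    thus "g' u / g u - a * (1/u) \<le> 0" by simp
  qed (use xy in auto)
  hence "ln (g y) \<le> ln (g x) + a * (ln y - ln x)" by (simp add: algebra_simps)
  hence "exp (ln (g y)) \<le> exp (ln (g x) + a * (ln y - ln x))" by simp
  moreover have "exp (ln (g x) + a * (ln y - ln x)) = g x * (y/x) powr a"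
    using xy U P[of x] by (simp add: exp_add powr_def ln_div)
  ultimately show ?thesis using P[of y] xy by simp
qed

lemma growth_lower:
  fixes g g' :: "real \<Rightarrow> real"
  assumes D: "\<And>u. u \<ge> U \<Longrightarrow> (g has_real_derivative g' u) (at u)"
    and P: "\<And>u. u \<ge> U \<Longrightarrow> g u > 0" and U: "U > 0"
    and Q: "\<And>u. u \<ge> U \<Longrightarrow> g' u * u / g u \<ge> a"
    and xy: "U \<le> x" "x \<le> y"
  shows "g x * (y / x) powr a \<le> g y"
proof -
  let ?h = "\<lambda>u. ln (g u) - a * ln u"
  have "?h x \<le> ?h y"
  proof (rule deriv_nonneg_imp_mono[where g = ?h and a = x and b = y and g' = "\<lambda>u. g' u / g u - a * (1/u)"])
    fix u assume u: "u \<in> {x..y}"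
    hence uU: "u \<ge> U" using xy by auto
    show "(?h has_real_derivative g' u / g u - a * (1/u)) (at u)"
      using uU U P[OF uU]
      by (auto intro!: derivative_eq_intros D)
    have "g' u * u / g u \<ge> a" using Q[OF uU] .
    hence "g' u / g u \<ge> a / u" using uU U P[OF uU]
      by (simp add: field_simps)
    thus "g' u / g u - a * (1/u) \<ge> 0" by simp
  qed (use xy in auto)
  hence "ln (g x) + a * (ln y - ln x) \<le> ln (g y)" by (simp add: algebra_simps)
  hence "exp (ln (g x) + a * (ln y - ln x)) \<le> exp (ln (g y))" by simp
  moreover have "exp (ln (g x) + a * (ln y - ln x)) = g x * (y/x) powr a"
    using xy U P[of x] by (simp add: exp_add powr_def ln_div)
  ultimately show ?thesis using P[of y] xy by simp
qed

lemma finite_le_set: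
  fixes \<rho> :: "nat \<Rightarrow> real"
  assumes "filterlim \<rho> at_top sequentially"
  shows "finite {n. \<rho> n \<le> t}"
proof -
  have "eventually (\<lambda>n. \<rho> n \<ge> t + 1) sequentially"
    using assms filterlim_at_top by blast
  then obtain N where N: "\<And>n. n \<ge> N \<Longrightarrow> \<rho> n \<ge> t + 1"
    by (auto simp: eventually_at_top_linorder)
  have "{n. \<rho> n \<le> t} \<subseteq> {..<N}"
  proof
    fix n assume "n \<in> {n. \<rho> n \<le> t}"
    hence "\<rho> n \<le> t" by simp
    hence "\<not> n \<ge> N" using N[of n] by linarith
    thus "n \<in> {..<N}" by simp
  qed
  thus ?thesis using finite_subset by blast
qed

lemma count_bound:
  fixes \<phi> \<rho> :: "_ \<Rightarrow> real"
  assumes summ: "summable (\<lambda>n. \<phi> (\<rho> n) powr (-\<nu>))" and nu: "\<nu> \<ge> 0"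
    and lim: "filterlim \<rho> at_top sequentially"
    and mono: "\<And>x y. T1 \<le> x \<Longrightarrow> x \<le> y \<Longrightarrow> \<phi> x \<le> \<phi> y"
    and ge1: "\<And>r. r \<ge> T1 \<Longrightarrow> \<phi> r \<ge> 1"
  shows "\<exists>K. \<forall>t\<ge>T1. real (card {n. \<rho> n \<le> t}) \<le> K * \<phi> t powr \<nu>"
proof -
  define A where "A = {n. \<rho> n \<le> T1}"
  define M where "M = (\<Sum>n. \<phi> (\<rho> n) powr (-\<nu>))"
  have finA: "finite A" unfolding A_def by (rule finite_le_set[OF lim])
  have "\<forall>t\<ge>T1. real (card {n. \<rho> n \<le> t}) \<le> (card A + M) * \<phi> t powr \<nu>"
  proof (intro allI impI)
    fix t assume t: "t \<ge> T1"
    define S where "S = {n. T1 < \<rho> n \<and> \<rho> n \<le> t}"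
    have finS: "finite S" unfolding S_def
      by (rule finite_subset[OF _ finite_le_set[OF lim, of t]]) auto
    have pt: "\<phi> t \<ge> 1" using ge1 t by auto
    have "real (card S) * \<phi> t powr (-\<nu>) = (\<Sum>n\<in>S. \<phi> t powr (-\<nu>))" by simp
    also have "\<dots> \<le> (\<Sum>n\<in>S. \<phi> (\<rho> n) powr (-\<nu>))"
    proof (rule sum_mono)
      fix n assume "n \<in> S"
      hence n: "T1 < \<rho> n" "\<rho> n \<le> t" by (auto simp: S_def)
      have "1 \<le> \<phi> (\<rho> n)" using ge1 n by auto
      moreover have "\<phi> (\<rho> n) \<le> \<phi> t" using mono n by auto
      ultimately show "\<phi> t powr (-\<nu>) \<le> \<phi> (\<rho> n) powr (-\<nu>)"
        using nu by (intro powr_mono2') auto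
    qed
    also have "\<dots> \<le> M" unfolding M_def
      by (rule sum_le_suminf[OF summ finS]) auto
    finally have "real (card S) * \<phi> t powr (-\<nu>) \<le> M" .
    hence "real (card S) * \<phi> t powr (-\<nu>) * \<phi> t powr \<nu> \<le> M * \<phi> t powr \<nu>"
      by (rule mult_right_mono) simp
    hence cS: "real (card S) \<le> M * \<phi> t powr \<nu>"
      using pt by (simp add: powr_minus field_simps)
    have "{n. \<rho> n \<le> t} \<subseteq> A \<union> S" by (auto simp: A_def S_def)
    hence "card {n. \<rho> n \<le> t} \<le> card (A \<union> S)"
      using finA finS by (intro card_mono) auto
    also have "\<dots> \<le> card A + card S" by (rule card_Un_le)
    finally have "real (card {n. \<rho> n \<le> t}) \<le> real (card A) + real (card S)" by linarith
    also have "real (card A) \<le> real (card A) * \<phi> t powr \<nu>"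
    proof -
      have "1 \<le> \<phi> t powr \<nu>" using pt nu by (simp add: ge_one_powr_ge_zero)
      from mult_left_mono[OF this, of "real (card A)"] show ?thesis by simp
    qed
    finally show "real (card {n. \<rho> n \<le> t}) \<le> (card A + M) * \<phi> t powr \<nu>"
      using cS by (simp add: algebra_simps)
  qed
  thus ?thesis by blast
qed

lemma term_near:
  fixes w zn :: complex and L :: real
  assumes r2: "norm w \<ge> 2" and le: "norm zn \<le> (norm w)^2" and nz: "zn \<noteq> 0"
    and disc: "norm (w - zn) > norm zn powr (-L)" and L: "L \<ge> 0"
  shows "ln (norm (1 - w/zn)) \<ge> -(2*(L+1)*ln (norm w))"
proof -
  define \<rho> where "\<rho> = norm zn"
  define r where "r = norm w"
  have \<rho>0: "\<rho> > 0" using nz by (simp add: \<rho>_def)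
  have eq: "norm (1 - w/zn) = norm (zn - w) / \<rho>"
    using nz by (simp add: \<rho>_def norm_divide[symmetric] diff_divide_distrib)
  have lnr: "ln r \<ge> 0" using r2 by (simp add: r_def)
  show ?thesis
  proof (cases "\<rho> \<ge> 1")
    case True
    have "norm (zn - w) > \<rho> powr (-L)" using disc by (simp add: \<rho>_def norm_minus_commute)
    hence "norm (zn - w) / \<rho> > \<rho> powr (-L) / \<rho>" using \<rho>0 by (simp add: divide_strict_right_mono)
    also have "\<rho> powr (-L) / \<rho> = \<rho> powr (-(L+1))"
    proof -
      have "\<rho> powr (-(L+1)) = \<rho> powr (-L) * \<rho> powr (-1)" by (subst powr_add[symmetric]) simp
      also have "\<rho> powr (-1) = 1/\<rho>" using \<rho>0 by (simp add: powr_minus divide_inverse)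
      finally show ?thesis using \<rho>0 by (simp add: divide_inverse)
    qed
    finally have gt: "norm (1 - w/zn) > \<rho> powr (-(L+1))" using eq by simp
    have pos: "\<rho> powr (-(L+1)) > 0" using \<rho>0 by simp
    have "ln (norm (1 - w/zn)) \<ge> ln (\<rho> powr (-(L+1)))"
      using gt pos by (subst ln_le_cancel_iff) auto
    also have "ln (\<rho> powr (-(L+1))) = -(L+1) * ln \<rho>" using \<rho>0 by (simp add: ln_powr)
    finally have a: "ln (norm (1 - w/zn)) \<ge> -(L+1) * ln \<rho>" .
    have "ln \<rho> \<le> ln (r^2)" using le \<rho>0 by (intro ln_mono) (auto simp: \<rho>_def r_def)
    also have "ln (r^2) = 2 * ln r" using r2 by (simp add: r_def ln_realpow)
    finally have "ln \<rho> \<le> 2 * ln r" .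
    hence "(L+1) * ln \<rho> \<le> (L+1) * (2 * ln r)" using L by (intro mult_left_mono) auto
    thus ?thesis using a by (simp add: r_def algebra_simps)
  next
    case False
    have "norm (w/zn) - norm (1::complex) \<le> norm (w/zn - 1)" by (rule norm_triangle_ineq2)
    hence "norm (w/zn) - 1 \<le> norm (1 - w/zn)" by (simp add: norm_minus_commute)
    moreover have "norm (w/zn) = r / \<rho>" by (simp add: norm_divide r_def \<rho>_def)
    moreover have "r / \<rho> \<ge> r" using False \<rho>0 r2 unfolding r_def
      by (simp add: le_divide_eq mult_left_le)
    ultimately have "norm (1 - w/zn) \<ge> 1" using r2 unfolding r_def by linarith
    hence "ln (norm (1 - w/zn)) \<ge> 0" by simp
    moreover have "2*(L+1)*ln r \<ge> 0" using lnr L by simp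
    ultimately show ?thesis by (simp add: r_def)
  qed
qed

lemma term_far:
  fixes w zn :: complex and c :: real
  assumes c: "c > 1" and ge: "norm zn \<ge> c * norm w" and w0: "norm w > 0"
  shows "ln (norm (1 - w/zn)) \<ge> -(c/(c-1)) * (norm w / norm zn)"
proof -
  define x where "x = norm w / norm zn"
  have zn0: "norm zn > 0" using ge c w0
    by (smt (verit) mult_less_cancel_right2)
  have x0: "x \<ge> 0" using zn0 by (simp add: x_def)
  have "x \<le> 1/c" using ge zn0 c w0 by (simp add: x_def field_simps)
  hence x1: "1 - x \<ge> (c-1)/c" using c by (simp add: field_simps)
  have cpos: "(c-1)/c > 0" using c by simp
  have "1 - norm (w/zn) \<le> norm (1 - w/zn)" by (metis norm_one norm_triangle_ineq2)
  hence n1: "1 - x \<le> norm (1 - w/zn)" by (simp add: x_def norm_divide)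
  have p: "1 - x > 0" using x1 cpos by linarith
  have "ln (1 - x) \<le> ln (norm (1 - w/zn))" using n1 p by (intro ln_mono) auto
  moreover have "ln (1 / (1 - x)) \<le> 1/(1-x) - 1" using p by (intro ln_le_minus_one) simp
  hence "ln (1 - x) \<ge> 1 - 1/(1-x)" using p by (simp add: ln_div)
  moreover have "1 - 1/(1-x) = - (x / (1-x))" using p by (simp add: field_simps)
  moreover have "x / (1-x) \<le> x / ((c-1)/c)" using x0 x1 cpos by (intro frac_le) auto
  moreover have "x / ((c-1)/c) = (c/(c-1)) * x" by simp
  ultimately show ?thesis unfolding x_def[symmetric] by linarith
qed

lemma far_block:
  fixes s \<rho> :: "_ \<Rightarrow> real" and r B q :: real
  assumes r: "r > 0" and s_gt: "\<And>u. u \<ge> r \<Longrightarrow> s u > u"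
    and fin: "\<And>t. finite {n. \<rho> n \<le> t}"
    and cnt: "\<And>k. real (card {n. \<rho> n \<le> s ((2::real)^k * r)}) \<le> B * q^k"
    and q: "0 \<le> q" "q < 2"
    and F: "finite F" "\<And>n. n \<in> F \<Longrightarrow> s r < \<rho> n"
  shows "(\<Sum>n\<in>F. r / \<rho> n) \<le> 2 * B / (1 - q/2)"
proof -
  have \<rho>pos: "\<rho> n > 0" if "n \<in> F" for n using F(2)[OF that] s_gt[of r] r by linarith
  obtain J where J: "(\<Sum>n\<in>F. \<rho> n) / r < 2^J" using real_arch_pow[of 2] by auto
  define ind where "ind n k = (if \<rho> n \<le> s ((2::real)^k * r) then 1 else (0::real))" for n k
  have pt: "r / \<rho> n \<le> 2 * (\<Sum>k\<le>J. (1/2)^k * ind n k)" if n: "n \<in> F" for n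
  proof -
    have "\<rho> n \<le> (\<Sum>n\<in>F. \<rho> n)"
      using F(1) n \<rho>pos by (intro member_le_sum) (auto intro: less_imp_le)
    also have "\<dots> < 2^J * r" using J r by (simp add: divide_less_eq)
    also have "\<dots> < s (2^J * r)" using s_gt[of "2^J * r"] r
      by (simp add: mult_le_cancel_right1)
    finally have exJ: "\<rho> n \<le> s (2^J * r)" by simp
    define j where "j = (LEAST j. \<rho> n \<le> s ((2::real)^j * r))"
    have jP: "\<rho> n \<le> s (2^j * r)" unfolding j_def by (rule LeastI[of _ J]) (rule exJ)
    have jJ: "j \<le> J" unfolding j_def by (rule Least_le) (rule exJ)
    have j0: "j \<noteq> 0"
    proof
      assume "j = 0" with jP F(2)[OF n] show False by simp
    qed
    then obtain i where i: "j = Suc i" by (cases j) auto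
    have "\<not> \<rho> n \<le> s (2^i * r)" using not_less_Least[of i "\<lambda>j. \<rho> n \<le> s ((2::real)^j * r)"] i
      unfolding j_def[symmetric] by auto
    hence "\<rho> n > s (2^i * r)" by simp
    moreover have "s (2^i * r) > 2^i * r" using s_gt[of "2^i*r"] r
      by (simp add: mult_le_cancel_right1)
    ultimately have "\<rho> n > 2^i * r" by linarith
    hence "r / \<rho> n < r / (2^i * r)" using r by (intro divide_strict_left_mono) (auto intro!: mult_pos_pos, smt (verit) mult_pos_pos zero_less_power)
    also have "r / (2^i * r) = 2 * (1/2)^j" using r i by (simp add: power_divide)
    finally have a: "r / \<rho> n < 2 * (1/2)^j" .
    have "(1/2)^j * ind n j \<le> (\<Sum>k\<le>J. (1/2)^k * ind n k)"
      using jJ by (intro member_le_sum) (auto simp: ind_def)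
    hence "(1/2)^j \<le> (\<Sum>k\<le>J. (1/2)^k * ind n k)" using jP by (simp add: ind_def)
    thus ?thesis using a by linarith
  qed
  have "(\<Sum>n\<in>F. r / \<rho> n) \<le> (\<Sum>n\<in>F. 2 * (\<Sum>k\<le>J. (1/2)^k * ind n k))"
    by (rule sum_mono) (rule pt)
  also have "\<dots> = 2 * (\<Sum>n\<in>F. \<Sum>k\<le>J. (1/2)^k * ind n k)" by (simp only: sum_distrib_left)
  also have "\<dots> = 2 * (\<Sum>k\<le>J. \<Sum>n\<in>F. (1/2)^k * ind n k)" by (subst sum.swap) (rule refl)
  also have "\<dots> = 2 * (\<Sum>k\<le>J. (1/2)^k * (\<Sum>n\<in>F. ind n k))" by (simp only: sum_distrib_left)
  also have "\<dots> \<le> 2 * (\<Sum>k\<le>J. (1/2)^k * (B * q^k))"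
  proof -
    have "(\<Sum>n\<in>F. ind n k) \<le> B * q^k" for k
    proof -
      have "(\<Sum>n\<in>F. ind n k) = real (card {n\<in>F. \<rho> n \<le> s (2^k * r)})"
        unfolding ind_def using F(1) by (simp add: sum.If_cases Int_def)
      also have "\<dots> \<le> real (card {n. \<rho> n \<le> s (2^k * r)})"
        using fin by (intro of_nat_mono card_mono) auto
      also have "\<dots> \<le> B * q^k" by (rule cnt)
      finally show ?thesis .
    qed
    thus ?thesis by (intro mult_left_mono sum_mono) auto
  qed
  also have "\<dots> = 2 * B * (\<Sum>k\<le>J. (q/2)^k)"
  proof -
    have e: "(1/2)^k*(B*q^k) = B*(q/2)^k" for k :: nat by (simp add: power_divide)
    show ?thesis by (simp only: e sum_distrib_left[symmetric] mult.assoc)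
  qed
  also have "\<dots> \<le> 2 * B * (1 / (1 - q/2))"
  proof -
    have "0 \<le> B * q^0" using cnt[of 0] of_nat_0_le_iff order_trans by blast
    hence B0: "B \<ge> 0" by simp
    have "(\<Sum>k\<le>J. (q/2)^k) \<le> (\<Sum>k. (q/2)^k)"
      using q by (intro sum_le_suminf summable_geometric) auto
    also have "\<dots> = 1 / (1 - q/2)" using q by (intro suminf_geometric) auto
    finally show ?thesis using B0 by (intro mult_left_mono) auto
  qed
  finally show ?thesis by simp
qed

lemma le_mul_ge1: "0 \<le> (X::real) \<Longrightarrow> 1 \<le> l \<Longrightarrow> X \<le> X * l"
  using mult_left_mono[of 1 l X] by simp

theorem lemma4p5:
  fixes R0 :: real and \<phi> s :: "real \<Rightarrow> real" and z :: "nat \<Rightarrow> complex"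
    and lam \<epsilon> :: real
  assumes R0: "R0 > 0"
    and phi_pos: "\<forall>r>R0. \<phi> r > 0"
    and phi_mono: "mono_on {R0<..} \<phi>"
    and phi_unbdd: "\<not> bdd_above (\<phi> ` {R0<..})"
    and phi_bounds: "\<forall>r>R0. ln r \<le> \<phi> r \<and> \<phi> r \<le> r"
    and s_pos: "\<forall>r>R0. s r > 0"
    and s_mono: "mono_on {R0<..} s"
    and s_bounds: "\<forall>r>R0. r < s r \<and> s r \<le> r\<^sup>2"
    and s_liminf: "Liminf at_top (\<lambda>r. ereal (s r / r)) > 1"
    and z_nz: "\<forall>n. z n \<noteq> 0"
    and z_inf: "filterlim (\<lambda>n. norm (z n)) at_top sequentially"
    and z_exp: "conv_exponent z < 1"
    and lam: "phi_exponent \<phi> z = ereal lam"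
    and lam_nonneg: "lam \<ge> 0"
    and phi_diff: "\<forall>r>R0. \<phi> differentiable (at r)"
    and s_diff: "\<forall>r>R0. s differentiable (at r)"
    and s_deriv: "Limsup at_top (\<lambda>r. ereal (r\<^sup>2 * deriv s r / (s r)\<^sup>2)) < \<infinity>"
    and cond: "let Q = (\<lambda>r. ereal (deriv \<phi> (s r) * deriv s r * r / \<phi> (s r)));
                    inv_lam = (if lam = 0 then \<infinity> else ereal (1 / lam))
               in Limsup at_top Q < inv_lam \<or> Liminf at_top Q \<ge> inv_lam"
    and eps: "\<epsilon> > 0"
  shows "\<exists>C R. \<forall>w::complex. norm w \<ge> R \<and>
            (\<forall>n. norm (w - z n) > norm (z n) powr (- (lam + \<epsilon>))) \<longrightarrow>
            ln (1 / norm (canonical_product z w))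
              \<le> C * \<phi> (s (norm w)) powr (lam + \<epsilon>) * ln (norm w)"
proof -
  define \<rho> where "\<rho> n = norm (z n)" for n
  define L where "L = lam + \<epsilon>"
  define g where "g u = \<phi> (s u)" for u
  define g' where "g' u = deriv \<phi> (s u) * deriv s u" for u
  define T1 where "T1 = max (R0 + 1) (exp 1)"
  have L: "L > lam" "L > 0" using eps lam_nonneg by (auto simp: L_def)
  have T1: "T1 > R0" "T1 \<ge> exp 1" "T1 > 0" using R0 by (auto simp: T1_def)
  have lim\<rho>: "filterlim \<rho> at_top sequentially" using z_inf by (simp add: \<rho>_def[abs_def])
  have fin: "\<And>t. finite {n. \<rho> n \<le> t}" by (rule finite_le_set[OF lim\<rho>])
  have \<rho>0: "\<rho> n > 0" for n using z_nz by (simp add: \<rho>_def)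
  have phi_ge1: "\<phi> r \<ge> 1" if "r \<ge> T1" for r
  proof -
    have "ln (exp 1) \<le> ln r" using that T1 by (intro ln_mono) auto
    hence "1 \<le> ln r" by simp
    also have "ln r \<le> \<phi> r" using phi_bounds that T1 by auto
    finally show ?thesis .
  qed
  have phi_mono': "\<phi> x \<le> \<phi> y" if "T1 \<le> x" "x \<le> y" for x y
    using phi_mono that T1 by (intro mono_onD[OF phi_mono]) auto
  have s_gt: "s u > u" if "u \<ge> T1" for u using s_bounds that T1 by auto
  have g_ge1: "g u \<ge> 1" if "u \<ge> T1" for u
    using phi_ge1[of "s u"] s_gt[OF that] that by (simp add: g_def)
  have g_deriv: "(g has_real_derivative g' u) (at u)" if "u \<ge> T1" for u
  proof -
    have d1: "(s has_real_derivative deriv s u) (at u)"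
      using s_diff that T1 by (simp add: DERIV_deriv_iff_real_differentiable)
    have d2: "(\<phi> has_real_derivative deriv \<phi> (s u)) (at (s u))"
      using phi_diff s_gt[OF that] that T1 by (simp add: DERIV_deriv_iff_real_differentiable)
    show ?thesis unfolding g_def[abs_def] g'_def by (rule DERIV_chain2[OF d2 d1])
  qed
  have g_pos: "g u > 0" if "u \<ge> T1" for u using g_ge1[OF that] by simp

  obtain \<mu>0 where mu0: "\<mu>0 > 0" "\<mu>0 < 1" "summable (\<lambda>n. \<rho> n powr (-\<mu>0))"
  proof -
    from z_exp obtain x where "x \<in> {ereal \<mu> | \<mu>. \<mu> > 0 \<and> summable (\<lambda>n. norm (z n) powr (- \<mu>))}" "x < 1"
      unfolding conv_exponent_def phi_exponent_def by (auto simp: Inf_less_iff)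
    thus ?thesis using that by (auto simp: \<rho>_def)
  qed
  have ev\<rho>: "eventually (\<lambda>n. \<rho> n \<ge> T1) sequentially"
    using lim\<rho> filterlim_at_top by blast
  have summ1: "summable (\<lambda>n. 1 / \<rho> n)"
  proof (rule summable_comparison_test_ev[OF _ mu0(3)])
    show "eventually (\<lambda>n. norm (1 / \<rho> n) \<le> \<rho> n powr (-\<mu>0)) sequentially"
      using ev\<rho>
    proof eventually_elim
      case (elim n)
      have "exp (1::real) \<ge> 1" by simp
      hence r1: "\<rho> n \<ge> 1" using elim T1 by linarith
      have "norm (1 / \<rho> n) = \<rho> n powr (-1)" using \<rho>0[of n] by (simp add: powr_minus divide_inverse)
      also have "\<dots> \<le> \<rho> n powr (-\<mu>0)" using r1 mu0 by (intro powr_mono) auto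
      finally show ?case .
    qed
  qed
  have summ\<phi>: "summable (\<lambda>n. \<phi> (\<rho> n) powr (-\<nu>))" if nu: "\<nu> > lam" for \<nu>
  proof -
    have "Inf {ereal \<mu> | \<mu>. \<mu> > 0 \<and> summable (\<lambda>n. \<phi> (norm (z n)) powr (- \<mu>))} < ereal \<nu>"
      using lam nu unfolding phi_exponent_def by simp
    then obtain x where "x \<in> {ereal \<mu> | \<mu>. \<mu> > 0 \<and> summable (\<lambda>n. \<phi> (norm (z n)) powr (- \<mu>))}" "x < ereal \<nu>"
      unfolding Inf_less_iff by blast
    then obtain \<mu> where mu: "\<mu> > 0" "\<mu> < \<nu>" "summable (\<lambda>n. \<phi> (\<rho> n) powr (-\<mu>))"
      by (auto simp: \<rho>_def)
    show ?thesis
    proof (rule summable_comparison_test_ev[OF _ mu(3)])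
      show "eventually (\<lambda>n. norm (\<phi> (\<rho> n) powr (-\<nu>)) \<le> \<phi> (\<rho> n) powr (-\<mu>)) sequentially"
        using ev\<rho>
      proof eventually_elim
        case (elim n)
        have "\<phi> (\<rho> n) \<ge> 1" using phi_ge1 elim by auto
        thus ?case using mu by (auto intro!: powr_mono)
      qed
    qed
  qed
  have count: "\<exists>K. K \<ge> 0 \<and> (\<forall>t\<ge>T1. real (card {n. \<rho> n \<le> t}) \<le> K * \<phi> t powr \<nu>)"
    if nu: "\<nu> > lam" for \<nu>
  proof -
    have nu0: "\<nu> \<ge> 0" using nu lam_nonneg by linarith
    obtain K where K: "\<forall>t\<ge>T1. real (card {n. \<rho> n \<le> t}) \<le> K * \<phi> t powr \<nu>"
      using count_bound[OF summ\<phi>[OF nu] nu0 lim\<rho> phi_mono' phi_ge1] by blast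
    have "0 \<le> K * \<phi> T1 powr \<nu>" using K[rule_format, of T1] of_nat_0_le_iff order_trans by blast
    moreover have "\<phi> T1 powr \<nu> > 0" using phi_ge1[of T1] by simp
    ultimately have "K \<ge> 0" by (simp add: zero_le_mult_iff)
    thus ?thesis using K by blast
  qed

  obtain c U1 where c: "c > 1" and U1: "\<And>r. r \<ge> U1 \<Longrightarrow> c * r < s r" "U1 > 0"
  proof -
    obtain c where c: "1 < ereal c" "ereal c < Liminf at_top (\<lambda>r. ereal (s r / r))"
      using ereal_dense2[OF s_liminf] by blast
    have "eventually (\<lambda>r. ereal c < ereal (s r / r)) at_top" by (rule less_LiminfD[OF c(2)])
    then obtain U where U: "\<And>r. r \<ge> U \<Longrightarrow> c < s r / r" by (auto simp: eventually_at_top_linorder)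
    show ?thesis
    proof (rule that[of c "max U 1"])
      show "1 < c" using c by simp
      fix r assume "max U 1 \<le> r"
      hence "c < s r / r" "r > 0" using U by auto
      thus "c * r < s r" by (simp add: field_simps)
    qed auto
  qed

  have far: "\<exists>Cf Uf. Cf \<ge> 0 \<and> Uf \<ge> T1 \<and> (\<forall>r\<ge>Uf. \<forall>F. finite F \<longrightarrow> (\<forall>n\<in>F. s r < \<rho> n) \<longrightarrow>
               (\<Sum>n\<in>F. r / \<rho> n) \<le> Cf * g r powr L)"
  proof -
    define Q where "Q = (\<lambda>r. ereal (deriv \<phi> (s r) * deriv s r * r / \<phi> (s r)))"
    define inv_lam where "inv_lam = (if lam = 0 then \<infinity> else ereal (1 / lam))"
    have Qg: "Q u = ereal (g' u * u / g u)" for u by (simp add: Q_def g_def g'_def)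
    from cond have "Limsup at_top Q < inv_lam \<or> Liminf at_top Q \<ge> inv_lam"
      unfolding Let_def Q_def inv_lam_def .
    thus ?thesis
    proof
      assume A: "Limsup at_top Q < inv_lam"
      obtain a where a: "a > 0" "a * lam < 1" "Limsup at_top Q < ereal a"
      proof (cases "lam = 0")
        case True
        have "Limsup at_top Q < \<infinity>" using A True by (simp add: inv_lam_def)
        then obtain a' where "Limsup at_top Q < ereal a'" using ereal_dense2 by blast
        thus ?thesis using that[of "max a' 1"] True by (simp add: ereal_less_eq(3) order_less_le_trans)
      next
        case False
        hence lp: "lam > 0" using lam_nonneg by simp
        have "Limsup at_top Q < ereal (1/lam)" using A False by (simp add: inv_lam_def)
        then obtain a' where a': "Limsup at_top Q < ereal a'" "ereal a' < ereal (1/lam)"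
          using ereal_dense2 by blast
        define a where "a = max a' (1/(2*lam))"
        have "1/(2*lam) < 1/lam" using lp by (simp add: field_simps)
        hence "a < 1/lam" using a' lp by (auto simp: a_def)
        hence "a * lam < 1" using lp by (simp add: field_simps)
        moreover have "a > 0"
        proof -
          have "1/(2*lam) > 0" using lp by simp
          thus ?thesis unfolding a_def by linarith
        qed
        moreover have "Limsup at_top Q < ereal a" using a'(1) by (auto simp: a_def intro: order_less_le_trans)
        ultimately show ?thesis using that by blast
      qed
      have "eventually (\<lambda>u. Q u < ereal a) at_top" by (rule Limsup_lessD[OF a(3)])
      then obtain U2 where U2: "\<And>u. u \<ge> U2 \<Longrightarrow> g' u * u / g u < a"
        by (auto simp: eventually_at_top_linorder Qg)
      define U' where "U' = max T1 U2"
      have U': "U' \<ge> T1" "U' > 0" using T1 by (auto simp: U'_def)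
      have grow: "g y \<le> g x * (y/x) powr a" if "U' \<le> x" "x \<le> y" for x y
      proof (rule growth_upper[where U=U' and g'=g', OF _ _ U'(2) _ that])
        fix u assume u: "U' \<le> u"
        hence uT: "u \<ge> T1" "u \<ge> U2" by (auto simp: U'_def)
        show "(g has_real_derivative g' u) (at u)" by (rule g_deriv[OF uT(1)])
      next
        fix u assume u: "U' \<le> u"
        hence uT: "u \<ge> T1" "u \<ge> U2" by (auto simp: U'_def)
        show "g u > 0" by (rule g_pos[OF uT(1)])
      next
        fix u assume u: "U' \<le> u"
        hence uT: "u \<ge> T1" "u \<ge> U2" by (auto simp: U'_def)
        show "g' u * u / g u \<le> a" using U2[OF uT(2)] by simp
      qed
      define \<nu> where "\<nu> = min L ((lam + 1/a)/2)"
      have lam_a: "lam < 1/a" using a by (simp add: field_simps)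
      have nu: "\<nu> > lam" "\<nu> \<le> L" "\<nu> \<ge> 0" "a * \<nu> < 1"
      proof -
        show "\<nu> > lam" using L lam_a by (simp add: \<nu>_def)
        show "\<nu> \<le> L" by (simp add: \<nu>_def)
        show "\<nu> \<ge> 0" using L lam_a lam_nonneg by (simp add: \<nu>_def)
        have "a * ((lam + 1/a)/2) = (a*lam + 1)/2" using a by (simp add: field_simps)
        also have "\<dots> < 1" using a by simp
        finally have "a * ((lam + 1/a)/2) < 1" .
        moreover have "a * \<nu> \<le> a * ((lam + 1/a)/2)"
        proof -
          have "\<nu> \<le> (lam + 1/a)/2" unfolding \<nu>_def by (rule min.cobounded2)
          thus ?thesis using a(1) by (intro mult_left_mono) auto
        qed
        ultimately show "a * \<nu> < 1" by linarith
      qed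
      obtain K where K: "K \<ge> 0" "\<forall>t\<ge>T1. real (card {n. \<rho> n \<le> t}) \<le> K * \<phi> t powr \<nu>"
        using count[OF nu(1)] by blast
      define q where "q = 2 powr (a * \<nu>)"
      have q: "0 \<le> q" "q < 2" using nu(4) powr_less_mono[of "a*\<nu>" 1 2] by (auto simp: q_def)
      define Cf where "Cf = 2 * K / (1 - q/2)"
      have Cf: "Cf \<ge> 0" using K q by (simp add: Cf_def)
      have main: "(\<Sum>n\<in>F. r / \<rho> n) \<le> Cf * g r powr L"
        if r: "r \<ge> U'" and F: "finite F" "\<forall>n\<in>F. s r < \<rho> n" for r F
      proof -
        have rT: "r \<ge> T1" using r U' by linarith
        have rpos: "r > 0" using rT T1 by linarith
        have cnt: "real (card {n. \<rho> n \<le> s ((2::real)^k * r)}) \<le> (K * g r powr \<nu>) * q^k" for k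
        proof -
          define y where "y = (2::real)^k * r"
          have ry: "r \<le> y" using rpos by (simp add: y_def)
          have yT: "y \<ge> T1" using ry rT by linarith
          have "real (card {n. \<rho> n \<le> s y}) \<le> K * \<phi> (s y) powr \<nu>"
            using K(2) s_gt[OF yT] yT by auto
          also have "\<phi> (s y) powr \<nu> \<le> (g r * (y/r) powr a) powr \<nu>"
            using grow[OF r ry] g_pos[OF yT] nu(3) unfolding g_def by (intro powr_mono2) auto
          also have "(g r * (y/r) powr a) powr \<nu> = g r powr \<nu> * q^k"
          proof -
            have yr: "y / r = 2 powr (real k)" using rpos by (simp add: y_def powr_realpow)
            have "(g r * (y/r) powr a) powr \<nu> = g r powr \<nu> * ((y/r) powr a) powr \<nu>"
              using g_pos[OF rT] by (simp add: powr_mult)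
            also have "((y/r) powr a) powr \<nu> = 2 powr (real k * (a * \<nu>))"
              by (simp add: yr powr_powr mult.assoc)
            also have "\<dots> = q ^ k"
            proof -
              have "q ^ k = q powr (real k)" unfolding q_def by (rule powr_realpow[symmetric]) simp
              also have "\<dots> = 2 powr (real k * (a * \<nu>))" unfolding q_def
                by (simp add: powr_powr mult.commute)
              finally show ?thesis by simp
            qed
            finally show ?thesis .
          qed
          finally show ?thesis using K(1) by (simp add: y_def mult_left_mono mult.assoc)
        qed
        have "(\<Sum>n\<in>F. r / \<rho> n) \<le> 2 * (K * g r powr \<nu>) / (1 - q/2)"
          by (rule far_block[OF rpos _ fin cnt q F(1)]) (use s_gt rT F(2) in auto)
        also have "\<dots> = Cf * g r powr \<nu>" by (simp add: Cf_def)
        also have "\<dots> \<le> Cf * g r powr L"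
          using Cf g_ge1[OF rT] nu(2) by (intro mult_left_mono powr_mono) auto
        finally show ?thesis .
      qed
      show ?thesis
      proof (intro exI conjI allI impI)
        show "Cf \<ge> 0" by (rule Cf)
        show "U' \<ge> T1" by (rule U'(1))
        fix r and F :: "nat set" assume "U' \<le> r" "finite F" "\<forall>n\<in>F. s r < \<rho> n"
        thus "(\<Sum>n\<in>F. r / \<rho> n) \<le> Cf * g r powr L" by (rule main)
      qed
    next
      assume B: "Liminf at_top Q \<ge> inv_lam"
      define b where "b = 1 / (lam + \<epsilon>/2)"
      have bpos: "b > 0" using lam_nonneg eps by (simp add: b_def)
      have "ereal b < inv_lam"
      proof (cases "lam = 0")
        case True thus ?thesis by (simp add: inv_lam_def)
      next
        case False
        hence "lam > 0" using lam_nonneg by simp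
        hence "b < 1/lam" using eps by (simp add: b_def field_simps)
        thus ?thesis using False by (simp add: inv_lam_def)
      qed
      hence "ereal b < Liminf at_top Q" using B by (rule order_less_le_trans)
      hence "eventually (\<lambda>u. ereal b < Q u) at_top" by (rule less_LiminfD)
      then obtain U2 where U2: "\<And>u. u \<ge> U2 \<Longrightarrow> b < g' u * u / g u"
        by (auto simp: eventually_at_top_linorder Qg)
      define x0 where "x0 = max T1 U2"
      have x0: "x0 \<ge> T1" "x0 > 0" using T1 by (auto simp: x0_def)
      have grow: "g x0 * (y/x0) powr b \<le> g y" if "x0 \<le> y" for y
      proof (rule growth_lower[where U=x0 and g'=g', OF _ _ x0(2) _ order_refl that])
        fix u assume u: "x0 \<le> u"
        hence uT: "u \<ge> T1" "u \<ge> U2" by (auto simp: x0_def)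
        show "(g has_real_derivative g' u) (at u)" by (rule g_deriv[OF uT(1)])
      next
        fix u assume u: "x0 \<le> u"
        hence uT: "u \<ge> T1" "u \<ge> U2" by (auto simp: x0_def)
        show "g u > 0" by (rule g_pos[OF uT(1)])
      next
        fix u assume u: "x0 \<le> u"
        hence uT: "u \<ge> T1" "u \<ge> U2" by (auto simp: x0_def)
        show "g' u * u / g u \<ge> b" using U2[OF uT(2)] by simp
      qed
      define \<kappa> where "\<kappa> = (x0 powr b / g x0) powr L"
      define S1 where "S1 = (\<Sum>n. 1 / \<rho> n)"
      have S1: "S1 \<ge> 0" unfolding S1_def using \<rho>0 by (intro suminf_nonneg summ1) (auto intro: less_imp_le)
      define Cf where "Cf = S1 * \<kappa>"
      have Cf: "Cf \<ge> 0" using S1 by (simp add: Cf_def \<kappa>_def)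
      have bL: "b * L \<ge> 1" using lam_nonneg eps by (simp add: b_def L_def field_simps)
      have rbound: "r \<le> \<kappa> * g r powr L" if r: "r \<ge> x0" for r
      proof -
        have rT: "r \<ge> T1" using r x0 by linarith
        have "exp (1::real) \<ge> 1" by simp
        hence r1: "r \<ge> 1" using rT T1 by linarith
        have "r = r powr 1" using r1 by simp
        also have "\<dots> \<le> r powr (b * L)" using r1 bL by (intro powr_mono) auto
        also have "\<dots> = (r powr b) powr L" by (simp add: powr_powr)
        finally have A: "r \<le> (r powr b) powr L" .
        have "r powr b = (r/x0) powr b * x0 powr b" using x0 r1
          by (simp add: powr_mult[symmetric])
        also have "(r/x0) powr b * x0 powr b \<le> (g r / g x0) * x0 powr b"
        proof -
          have "(r/x0) powr b \<le> g r / g x0" using grow[OF r] g_pos[OF x0(1)]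
            by (simp add: field_simps)
          thus ?thesis by (intro mult_right_mono) auto
        qed
        finally have B: "r powr b \<le> (g r / g x0) * x0 powr b" .
        have C: "(r powr b) powr L \<le> ((g r / g x0) * x0 powr b) powr L"
          using B L by (intro powr_mono2) auto
        have D: "((g r / g x0) * x0 powr b) powr L = g r powr L * \<kappa>"
          unfolding \<kappa>_def using g_pos[OF rT] g_pos[OF x0(1)]
          by (simp add: powr_mult powr_divide)
        show ?thesis using A C D by (simp add: mult.commute)
      qed
      have main: "(\<Sum>n\<in>F. r / \<rho> n) \<le> Cf * g r powr L"
        if r: "r \<ge> x0" and F: "finite F" for r F
      proof -
        have r0: "r \<ge> 0" using r x0 by linarith
        have e: "(\<Sum>n\<in>F. r / \<rho> n) = r * (\<Sum>n\<in>F. 1 / \<rho> n)" by (simp add: sum_distrib_left)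
        have "(\<Sum>n\<in>F. 1 / \<rho> n) \<le> S1" unfolding S1_def
          using summ1 F \<rho>0 by (intro sum_le_suminf) (auto intro: less_imp_le)
        hence a1: "r * (\<Sum>n\<in>F. 1 / \<rho> n) \<le> r * S1" using r0 by (rule mult_left_mono)
        have a2: "r * S1 \<le> (\<kappa> * g r powr L) * S1" using rbound[OF r] S1 by (rule mult_right_mono)
        have a3: "(\<kappa> * g r powr L) * S1 = Cf * g r powr L" by (simp add: Cf_def)
        show ?thesis using e a1 a2 a3 by linarith
      qed
      show ?thesis
      proof (intro exI conjI allI impI)
        show "Cf \<ge> 0" by (rule Cf)
        show "x0 \<ge> T1" by (rule x0(1))
        fix r and F :: "nat set" assume "x0 \<le> r" "finite F"
        thus "(\<Sum>n\<in>F. r / \<rho> n) \<le> Cf * g r powr L" by (rule main)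
      qed
    qed
  qed
  then obtain Cf Uf where Cf: "Cf \<ge> 0" "Uf \<ge> T1"
    and farb0: "\<forall>r\<ge>Uf. \<forall>F. finite F \<longrightarrow> (\<forall>n\<in>F. s r < \<rho> n) \<longrightarrow> (\<Sum>n\<in>F. r / \<rho> n) \<le> Cf * g r powr L"
    by auto
  have farb: "(\<Sum>n\<in>F. r / \<rho> n) \<le> Cf * g r powr L"
    if "r \<ge> Uf" "finite F" "\<forall>n\<in>F. s r < \<rho> n" for r and F :: "nat set"
    using farb0 that by blast
  obtain KL where KL: "KL \<ge> 0" "\<forall>t\<ge>T1. real (card {n. \<rho> n \<le> t}) \<le> KL * \<phi> t powr L"
    using count[OF L(1)] by blast

  define C where "C = 2*(L+1)*KL + c/(c-1) * Cf"
  define R where "R = max (max 2 Uf) U1"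
  show ?thesis
  proof (intro exI allI impI)
    fix w :: complex
    assume asm: "norm w \<ge> R \<and> (\<forall>n. norm (w - z n) > norm (z n) powr (- (lam + \<epsilon>)))"
    define r where "r = norm w"
    have r: "r \<ge> 2" "r \<ge> Uf" "r \<ge> U1" "r \<ge> T1" using asm Cf by (auto simp: r_def R_def)
    have rpos: "r > 0" using r by linarith
    have "ln (exp 1) \<le> ln r" using r(4) T1 by (intro ln_mono) auto
    hence lnr: "ln r \<ge> 1" by simp
    have disc: "norm (w - z n) > \<rho> n powr (-L)" for n using asm by (simp add: \<rho>_def L_def)
    have srT: "s r \<ge> T1" using s_gt[OF r(4)] r(4) by linarith
    have sr2: "s r \<le> r^2" using s_bounds r(4) T1 by auto
    have Gpos: "\<phi> (s r) powr L \<ge> 0" by simp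
    define B where "B = 2*(L+1)*ln r * (KL * \<phi> (s r) powr L) + c/(c-1) * (Cf * \<phi> (s r) powr L)"
    have fac_nz: "1 - w / z n \<noteq> 0" for n
    proof
      assume "1 - w / z n = 0"
      hence "w = z n" using z_nz by (simp add: field_simps)
      thus False using disc[of n] by simp
    qed
    have sumb: "(\<Sum>n\<in>A. ln (norm (1 - w / z n))) \<ge> -B" if A: "finite A" for A
    proof -
      define A1 where "A1 = {n\<in>A. \<rho> n \<le> s r}"
      define A2 where "A2 = {n\<in>A. \<not> \<rho> n \<le> s r}"
      have split: "(\<Sum>n\<in>A. ln (norm (1 - w / z n))) =
          (\<Sum>n\<in>A1. ln (norm (1 - w / z n))) + (\<Sum>n\<in>A2. ln (norm (1 - w / z n)))"
      proof -
        have u: "A = A1 \<union> A2" "A1 \<inter> A2 = {}" by (auto simp: A1_def A2_def)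
        have f: "finite A1" "finite A2" using A by (auto simp: A1_def A2_def)
        show ?thesis by (subst u(1)) (rule sum.union_disjoint[OF f u(2)])
      qed
      have "(\<Sum>n\<in>A1. ln (norm (1 - w / z n))) \<ge> (\<Sum>n\<in>A1. -(2*(L+1)*ln r))"
      proof (rule sum_mono)
        fix n assume "n \<in> A1"
        hence "\<rho> n \<le> s r" by (simp add: A1_def)
        hence "norm (z n) \<le> (norm w)^2" using sr2 by (simp add: \<rho>_def r_def)
        thus "-(2*(L+1)*ln r) \<le> ln (norm (1 - w / z n))"
          using term_near[of w "z n" L] r(1) z_nz disc[of n] L by (simp add: r_def \<rho>_def)
      qed
      moreover have "(\<Sum>n\<in>A1. -(2*(L+1)*ln r)) \<ge> -(2*(L+1)*ln r * (KL * \<phi> (s r) powr L))"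
      proof -
        have "card A1 \<le> card {n. \<rho> n \<le> s r}" using fin by (intro card_mono) (auto simp: A1_def)
        hence "real (card A1) \<le> KL * \<phi> (s r) powr L" using KL(2) srT
          by (meson of_nat_le_iff order_trans)
        moreover have "2*(L+1)*ln r \<ge> 0" using L lnr by simp
        ultimately have "real (card A1) * (2*(L+1)*ln r) \<le> KL * \<phi> (s r) powr L * (2*(L+1)*ln r)"
          by (intro mult_right_mono)
        thus ?thesis by (simp add: mult_ac)
      qed
      moreover have "(\<Sum>n\<in>A2. ln (norm (1 - w / z n))) \<ge> -(c/(c-1) * (Cf * \<phi> (s r) powr L))"
      proof -
        have "(\<Sum>n\<in>A2. ln (norm (1 - w / z n))) \<ge> (\<Sum>n\<in>A2. -(c/(c-1)) * (r / \<rho> n))"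
        proof (rule sum_mono)
          fix n assume "n \<in> A2"
          hence "\<rho> n > s r" by (simp add: A2_def)
          moreover have "c * r < s r" using U1(1)[OF r(3)] .
          ultimately have "norm (z n) \<ge> c * norm w" by (simp add: \<rho>_def r_def)
          thus "-(c/(c-1)) * (r / \<rho> n) \<le> ln (norm (1 - w / z n))"
            using term_far[of c w "z n"] c rpos by (simp add: r_def \<rho>_def)
        qed
        also have "(\<Sum>n\<in>A2. -(c/(c-1)) * (r / \<rho> n)) = -(c/(c-1)) * (\<Sum>n\<in>A2. r / \<rho> n)"
          by (simp add: sum_distrib_left)
        also have "\<dots> \<ge> -(c/(c-1)) * (Cf * g r powr L)"
        proof -
          have "(\<Sum>n\<in>A2. r / \<rho> n) \<le> Cf * g r powr L"
            using A by (intro farb r(2)) (auto simp: A2_def)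
          moreover have "c/(c-1) \<ge> 0" using c by simp
          ultimately have "c/(c-1) * (\<Sum>n\<in>A2. r / \<rho> n) \<le> c/(c-1) * (Cf * g r powr L)"
            by (intro mult_left_mono)
          thus ?thesis by linarith
        qed
        finally show ?thesis by (simp add: g_def)
      qed
      ultimately show ?thesis unfolding B_def using split by linarith
    qed
    have conv: "convergent_prod (\<lambda>n. 1 - w / z n)"
    proof (rule abs_convergent_prod_imp_convergent_prod, rule summable_imp_abs_convergent_prod)
      have "summable (\<lambda>n. r * (1 / \<rho> n))" using summ1 by (rule summable_mult)
      thus "summable (\<lambda>n. norm ((1 - w / z n) - 1))"
        by (simp add: norm_divide r_def \<rho>_def)
    qed
    have lim: "(\<lambda>N. norm (\<Prod>n\<le>N. 1 - w / z n)) \<longlonglongrightarrow> norm (canonical_product z w)"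
      unfolding canonical_product_def by (intro tendsto_norm convergent_prod_LIMSEQ conv)
    have "exp (-B) \<le> norm (canonical_product z w)"
    proof (rule LIMSEQ_le_const[OF lim], intro exI allI impI)
      fix N :: nat
      have pos: "\<And>n. norm (1 - w / z n) > 0" using fac_nz by simp
      have "norm (\<Prod>n\<le>N. 1 - w / z n) = (\<Prod>n\<le>N. norm (1 - w / z n))" by (simp add: prod_norm)
      also have "\<dots> = exp (ln (\<Prod>n\<le>N. norm (1 - w / z n)))"
        using pos by (simp add: prod_pos)
      also have "ln (\<Prod>n\<le>N. norm (1 - w / z n)) = (\<Sum>n\<le>N. ln (norm (1 - w / z n)))"
        using pos by (intro ln_prod) auto
      finally have "norm (\<Prod>n\<le>N. 1 - w / z n) = exp (\<Sum>n\<le>N. ln (norm (1 - w / z n)))" .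
      moreover have "exp (-B) \<le> exp (\<Sum>n\<le>N. ln (norm (1 - w / z n)))"
        using sumb[of "{..N}"] by simp
      ultimately show "exp (-B) \<le> norm (\<Prod>n\<le>N. 1 - w / z n)" by simp
    qed
    hence "ln (exp (-B)) \<le> ln (norm (canonical_product z w))" by (intro ln_mono) auto
    hence lnP: "ln (1 / norm (canonical_product z w)) \<le> B"
    proof -
      have "norm (canonical_product z w) > 0"
        using \<open>exp (-B) \<le> _\<close> exp_gt_zero[of "-B"] by linarith
      hence "ln (1 / norm (canonical_product z w)) = - ln (norm (canonical_product z w))"
        by (simp add: ln_div)
      thus ?thesis using \<open>ln (exp (-B)) \<le> _\<close> by simp
    qed
    have "B \<le> C * \<phi> (s r) powr L * ln r"
    proof -
      have "c/(c-1) * (Cf * \<phi> (s r) powr L) \<le> c/(c-1) * (Cf * \<phi> (s r) powr L) * ln r"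
      proof -
        have "c/(c-1) * (Cf * \<phi> (s r) powr L) \<ge> 0" using c Cf by simp
        thus ?thesis using lnr by (rule le_mul_ge1)
      qed
      thus ?thesis unfolding B_def C_def by (simp add: algebra_simps)
    qed
    with lnP show "ln (1 / norm (canonical_product z w)) \<le> C * \<phi> (s (norm w)) powr (lam + \<epsilon>) * ln (norm w)"
      by (simp add: r_def L_def)
  qed
qed

end
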